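(* Let $(\sigma_N)_{N \geq 1}$ be a sequence such that $\sigma_N$ is a permutation of $\{1,\dots,N\}$ for every $N \geq 1$, and such that for every $N \geq 1$, $\sigma_N$ is obtained by removing the element $N+1$ from the cycle structure of $\sigma_{N+1}$. For every finite subset $I \subset \mathbb{N}^* = \{1,2,\dots\}$ and every integer $N \geq \max I$, let $\sigma^{(N)}_I$ be the permutation of $I$ obtained by removing the elements of $\{1,\dots,N\} \setminus I$ from the cycle structure of $\sigma_N$. Then $\sigma^{(N)}_I$ does not depend on the choice of $N \geq \max I$; writing $\sigma_I := \sigma^{(N)}_I$, for all finite subsets $I \subset J$ of $\mathbb{N}^*$, the permutation $\sigma_I$ is obtained from the cycle structure of $\sigma_J$ by removing the elements of $J \setminus I$.
   Context: For finite sets $I \subset J$ and a permutation $\tau$ of $J$, "removing the elements of $J \setminus I$ from the cycle structure of $\tau$" means forming the permutation $\pi$ of $I$ given by $\pi(x) = \tau^m(x)$, where $m \geq 1$ is the smallest integer such that $\tau^m(x) \in I$. *)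

theory Defs
  imports "HOL-Combinatorics.Permutations"
begin

text \<open>Removing the elements of J - I from the cycle structure of a permutation tau of J:
  pi(x) = tau^m(x) with m >= 1 least such that tau^m(x) is in I (identity outside I,
  following the convention of the permutes predicate).\<close>
definition remove_from_cycles :: "(nat \<Rightarrow> nat) \<Rightarrow> nat set \<Rightarrow> nat \<Rightarrow> nat" where
  "remove_from_cycles \<tau> I x =
     (if x \<in> I then (\<tau> ^^ (LEAST m. m \<ge> 1 \<and> (\<tau> ^^ m) x \<in> I)) x else x)"

end

theory Submission
  imports Defs
begin

lemma rfc_eq:
  assumes "x \<in> I" "m \<ge> 1" "(\<tau> ^^ m) x \<in> I" "\<forall>j. 1 \<le> j \<and> j < m \<longrightarrow> (\<tau> ^^ j) x \<notin> I"
  shows "remove_from_cycles \<tau> I x = (\<tau> ^^ m) x"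
proof -
  have "(LEAST m. m \<ge> 1 \<and> (\<tau> ^^ m) x \<in> I) = m"
    by (rule Least_equality) (use assms in \<open>auto simp: not_less[symmetric]\<close>)
  thus ?thesis using assms(1) unfolding remove_from_cycles_def by simp
qed

lemma rfc_J:
  assumes "x \<in> J" "n \<ge> 1" "(\<tau> ^^ n) x \<in> J"
  obtains m where "m \<ge> 1" "m \<le> n" "(\<tau> ^^ m) x \<in> J"
    "\<forall>j. 1 \<le> j \<and> j < m \<longrightarrow> (\<tau> ^^ j) x \<notin> J"
    "remove_from_cycles \<tau> J x = (\<tau> ^^ m) x"
proof -
  let ?m = "LEAST m. m \<ge> 1 \<and> (\<tau> ^^ m) x \<in> J"
  have P: "?m \<ge> 1 \<and> (\<tau> ^^ ?m) x \<in> J" by (rule LeastI[of _ n]) (use assms in auto)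
  have le: "?m \<le> n" by (rule Least_le) (use assms in auto)
  have nj: "\<forall>j. 1 \<le> j \<and> j < ?m \<longrightarrow> (\<tau> ^^ j) x \<notin> J"
    using not_less_Least by blast
  have "remove_from_cycles \<tau> J x = (\<tau> ^^ ?m) x"
    using assms(1) unfolding remove_from_cycles_def by simp
  thus ?thesis using that P le nj by blast
qed

lemma key_aux:
  assumes IJ: "I \<subseteq> J"
  shows "\<And>x. x \<in> J \<Longrightarrow> m \<ge> 1 \<Longrightarrow> (\<tau> ^^ m) x \<in> I \<Longrightarrow>
     (\<forall>j. 1 \<le> j \<and> j < m \<longrightarrow> (\<tau> ^^ j) x \<notin> I) \<Longrightarrow>
     \<exists>k\<ge>1. (remove_from_cycles \<tau> J ^^ k) x = (\<tau> ^^ m) x \<and>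
        (\<forall>i. 1 \<le> i \<and> i < k \<longrightarrow> (remove_from_cycles \<tau> J ^^ i) x \<notin> I)"
proof (induction m rule: less_induct)
  case (less m x)
  let ?\<pi> = "remove_from_cycles \<tau> J"
  from less.prems IJ obtain m' where m': "m' \<ge> 1" "m' \<le> m" "(\<tau> ^^ m') x \<in> J"
    "\<forall>j. 1 \<le> j \<and> j < m' \<longrightarrow> (\<tau> ^^ j) x \<notin> J" "?\<pi> x = (\<tau> ^^ m') x"
    using rfc_J[of x J m \<tau>] by blast
  show ?case
  proof (cases "m' = m")
    case True
    thus ?thesis using m' by (intro exI[of _ 1]) auto
  next
    case False
    define y where "y = (\<tau> ^^ m') x"
    have ylt: "m' < m" using False m' by simp
    have yJ: "y \<in> J" using m' y_def by simp
    have yI: "y \<notin> I" using less.prems(4) m' ylt y_def by auto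
    have sh: "\<And>j. (\<tau> ^^ j) y = (\<tau> ^^ (j + m')) x" by (simp add: y_def funpow_add)
    have "\<exists>k\<ge>1. (?\<pi> ^^ k) y = (\<tau> ^^ (m - m')) y \<and>
        (\<forall>i. 1 \<le> i \<and> i < k \<longrightarrow> (?\<pi> ^^ i) y \<notin> I)"
    proof (rule less.IH)
      show "m - m' < m" using m' ylt by simp
      show "y \<in> J" by fact
      show "1 \<le> m - m'" using ylt by simp
      show "(\<tau> ^^ (m - m')) y \<in> I" using sh[of "m-m'"] ylt less.prems(3) by simp
      show "\<forall>j. 1 \<le> j \<and> j < m - m' \<longrightarrow> (\<tau> ^^ j) y \<notin> I"
        using sh less.prems(4) by auto
    qed
    then obtain k where k: "k \<ge> 1" "(?\<pi> ^^ k) y = (\<tau> ^^ (m - m')) y"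
      "\<forall>i. 1 \<le> i \<and> i < k \<longrightarrow> (?\<pi> ^^ i) y \<notin> I" by blast
    have pk: "\<And>i. (?\<pi> ^^ Suc i) x = (?\<pi> ^^ i) y"
      by (simp only: funpow_Suc_right comp_apply m'(5) y_def)
    show ?thesis
    proof (intro exI[of _ "Suc k"] conjI allI impI)
      show "(?\<pi> ^^ Suc k) x = (\<tau> ^^ m) x" using pk k sh[of "m-m'"] ylt by simp
      fix i assume i: "1 \<le> i \<and> i < Suc k"
      then obtain i' where ii: "i = Suc i'" by (cases i) auto
      have "(?\<pi> ^^ i') y \<notin> I"
      proof (cases "i' = 0")
        case True thus ?thesis using yI by simp
      next
        case False thus ?thesis using k(3) ii i by simp
      qed
      thus "(?\<pi> ^^ i) x \<notin> I" unfolding ii pk .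
    qed simp
  qed
qed

lemma key:
  assumes "\<tau> permutes S" "finite S" "I \<subseteq> J" "J \<subseteq> S"
  shows "remove_from_cycles \<tau> I = remove_from_cycles (remove_from_cycles \<tau> J) I"
proof
  fix x
  show "remove_from_cycles \<tau> I x = remove_from_cycles (remove_from_cycles \<tau> J) I x"
  proof (cases "x \<in> I")
    case False thus ?thesis by (simp add: remove_from_cycles_def)
  next
    case True
    have "permutation \<tau>" using assms permutation_permutes by blast
    then obtain n where n: "n > 0" "(\<tau> ^^ n) x = x" using permutation_self by metis
    let ?m = "LEAST m. m \<ge> 1 \<and> (\<tau> ^^ m) x \<in> I"
    have P: "?m \<ge> 1 \<and> (\<tau> ^^ ?m) x \<in> I" by (rule LeastI[of _ n]) (use n True in auto)
    have nj: "\<forall>j. 1 \<le> j \<and> j < ?m \<longrightarrow> (\<tau> ^^ j) x \<notin> I"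
      using not_less_Least by blast
    have e1: "remove_from_cycles \<tau> I x = (\<tau> ^^ ?m) x" using rfc_eq P nj True by blast
    obtain k where k: "k\<ge>1" "(remove_from_cycles \<tau> J ^^ k) x = (\<tau> ^^ ?m) x"
        "\<forall>i. 1 \<le> i \<and> i < k \<longrightarrow> (remove_from_cycles \<tau> J ^^ i) x \<notin> I"
      using key_aux[OF assms(3), of x ?m \<tau>] P nj True assms(3) by blast
    have "remove_from_cycles (remove_from_cycles \<tau> J) I x = (remove_from_cycles \<tau> J ^^ k) x"
      using rfc_eq[OF True k(1)] k P by auto
    thus ?thesis using e1 k by simp
  qed
qed

lemma rfc_self:
  assumes "\<tau> permutes S" shows "remove_from_cycles \<tau> S = \<tau>"
proof
  fix x show "remove_from_cycles \<tau> S x = \<tau> x"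
  proof (cases "x \<in> S")
    case True
    have "remove_from_cycles \<tau> S x = (\<tau> ^^ 1) x"
      by (rule rfc_eq) (use True assms permutes_in_image[OF assms] in auto)
    thus ?thesis by simp
  next
    case False thus ?thesis using assms by (simp add: remove_from_cycles_def permutes_not_in)
  qed
qed

theorem proposition2p1:
  fixes \<sigma> :: "nat \<Rightarrow> nat \<Rightarrow> nat"
  assumes perm: "\<And>N. N \<ge> 1 \<Longrightarrow> \<sigma> N permutes {1..N}"
    and compat: "\<And>N. N \<ge> 1 \<Longrightarrow> \<sigma> N = remove_from_cycles (\<sigma> (Suc N)) {1..N}"
  shows "(\<forall>I N N'. N \<ge> 1 \<and> N' \<ge> 1 \<and> I \<subseteq> {1..N} \<and> I \<subseteq> {1..N'} \<longrightarrow>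
            remove_from_cycles (\<sigma> N) I = remove_from_cycles (\<sigma> N') I)
       \<and> (\<forall>I J N. N \<ge> 1 \<and> I \<subseteq> J \<and> J \<subseteq> {1..N} \<longrightarrow>
            remove_from_cycles (\<sigma> N) I
              = remove_from_cycles (remove_from_cycles (\<sigma> N) J) I)"
proof -
  have iter: "\<sigma> N = remove_from_cycles (\<sigma> (N + k)) {1..N}" if "N \<ge> 1" for N k
  proof (induction k)
    case 0 thus ?case using rfc_self[OF perm[OF that]] by simp
  next
    case (Suc k)
    have c: "\<sigma> (N + k) = remove_from_cycles (\<sigma> (N + Suc k)) {1..N+k}"
      using compat[of "N+k"] that by simp
    have "remove_from_cycles (\<sigma> (N + Suc k)) {1..N}
        = remove_from_cycles (remove_from_cycles (\<sigma> (N + Suc k)) {1..N+k}) {1..N}"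
      by (rule key[OF perm[of "N + Suc k"]]) (use that in auto)
    also have "\<dots> = remove_from_cycles (\<sigma> (N + k)) {1..N}" using c by simp
    also have "\<dots> = \<sigma> N" using Suc.IH by simp
    finally show ?case by simp
  qed
  have A: "remove_from_cycles (\<sigma> N) I = remove_from_cycles (\<sigma> N') I"
    if "N \<ge> 1" "N \<le> N'" "I \<subseteq> {1..N}" for I N N'
  proof -
    have "\<sigma> N = remove_from_cycles (\<sigma> N') {1..N}" using iter[OF that(1), of "N' - N"] that(2) by (simp add: add_diff_inverse_nat)
    moreover have "remove_from_cycles (\<sigma> N') I = remove_from_cycles (remove_from_cycles (\<sigma> N') {1..N}) I"
      by (rule key[OF perm[of N']]) (use that in auto)
    ultimately show ?thesis by simp
  qed
  show ?thesis
  proof (intro conjI allI impI)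
    fix I :: "nat set" and N N' :: nat assume h: "N \<ge> 1 \<and> N' \<ge> 1 \<and> I \<subseteq> {1..N} \<and> I \<subseteq> {1..N'}"
    show "remove_from_cycles (\<sigma> N) I = remove_from_cycles (\<sigma> N') I"
    proof (cases "N \<le> N'")
      case True thus ?thesis using A h by blast
    next
      case False thus ?thesis using A[of N' N I] h by simp
    qed
  next
    fix I J :: "nat set" and N :: nat assume h: "N \<ge> 1 \<and> I \<subseteq> J \<and> J \<subseteq> {1..N}"
    thus "remove_from_cycles (\<sigma> N) I = remove_from_cycles (remove_from_cycles (\<sigma> N) J) I"
      using key[OF perm[of N]] by auto
  qed
qed

end
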